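(* Let $q$ be even and let $G=Sp(2n,q)=C_n(q)$ with $n>1$, or $G=\mathrm{Spin}^+(2n,q)=D_n(q)$ with $n>3$. Let $T_0$ be a split maximal torus of $G$ and $W=N_G(T_0)/T_0$ the Weyl group, acting on $\mathrm{Irr}\,T_0$ by conjugation. Then for every non-trivial $\beta\in\mathrm{Irr}\,T_0$ one has $|W\beta|\ge 2n$.
   Context: $T_0$ is a maximal torus contained in a Borel subgroup of the finite (non-twisted) Chevalley group $G$; it is a direct product of cyclic groups of order $q-1$. $W\beta$ denotes the orbit of $\beta$ under $W$. *)

theory Defs
  imports Complex_Main "HOL-Library.FuncSet" "Jordan_Normal_Form.Matrix"
begin

definition sp_form :: "nat \<Rightarrow> 'a :: field mat" where
  "sp_form n = mat (2*n) (2*n) (\<lambda>(i,j).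
      if i < n \<and> j = i + n then 1 else if n \<le> i \<and> i = j + n then - 1 else 0)"

definition Sp :: "nat \<Rightarrow> 'a :: field mat set" where
  "Sp n = {A \<in> carrier_mat (2*n) (2*n). transpose_mat A * sp_form n * A = sp_form n}"

definition quad_plus :: "nat \<Rightarrow> 'a :: field vec \<Rightarrow> 'a" where
  "quad_plus n x = (\<Sum>i<n. x $ i * x $ (n + i))"

definition O_plus :: "nat \<Rightarrow> 'a :: field mat set" where
  "O_plus n = {A \<in> carrier_mat (2*n) (2*n). invertible_mat A \<and>
     (\<forall>x \<in> carrier_vec (2*n). quad_plus n (A *\<^sub>v x) = quad_plus n x)}"

text \<open>Omega^+(2n,F): kernel of the Dickson invariant, which in characteristic 2 is
  rank(A - 1) mod 2, i.e. the parity of the dimension of the fixed space of A.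
  For a finite field F the fixed space has dimension k iff it has CARD(F)^k elements.
  For q even, Spin^+(2n,q) is isomorphic to Omega^+(2n,q).\<close>
definition Omega_plus :: "nat \<Rightarrow> 'a :: {field, finite} mat set" where
  "Omega_plus n = {A \<in> O_plus n. \<exists>k. even k \<and>
     card {x \<in> carrier_vec (2*n). A *\<^sub>v x = x} = card (UNIV :: 'a set) ^ k}"

definition split_torus :: "nat \<Rightarrow> 'a :: field mat set" where
  "split_torus n = {mat (2*n) (2*n) (\<lambda>(i,j). if i = j then
        (if i < n then t i else inverse (t (i - n))) else 0) | t. \<forall>i<n. t i \<noteq> 0}"

definition normalizer_mat :: "'a :: field mat set \<Rightarrow> 'a mat set \<Rightarrow> 'a mat set" where
  "normalizer_mat G T = {g \<in> G. \<exists>h \<in> G. g * h = 1\<^sub>m (dim_row g) \<and> h * g = 1\<^sub>m (dim_row g)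
       \<and> (\<lambda>t. g * t * h) ` T = T}"

text \<open>Linear (= irreducible, T abelian) complex characters of T.\<close>
definition linear_char :: "'a :: field mat set \<Rightarrow> ('a mat \<Rightarrow> complex) \<Rightarrow> bool" where
  "linear_char T \<beta> \<longleftrightarrow> (\<forall>s \<in> T. \<forall>t \<in> T. \<beta> (s * t) = \<beta> s * \<beta> t) \<and> (\<forall>t \<in> T. \<beta> t \<noteq> 0)"

text \<open>Orbit of beta under W = N_G(T)/T acting by conjugation; characters are
  considered as functions on T (restricted to T).\<close>
definition weyl_orbit :: "'a :: field mat set \<Rightarrow> 'a mat set \<Rightarrow> ('a mat \<Rightarrow> complex)
    \<Rightarrow> ('a mat \<Rightarrow> complex) set" where
  "weyl_orbit G T \<beta> = {restrict (\<lambda>t. \<beta> (h * t * g)) T | g h.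
      g \<in> normalizer_mat G T \<and> h \<in> G \<and> g * h = 1\<^sub>m (dim_row g) \<and> h * g = 1\<^sub>m (dim_row g)}"

end

theory Submission
  imports Defs
begin

definition invo :: "nat \<Rightarrow> (nat \<Rightarrow> nat) \<Rightarrow> bool" where
  "invo N p \<longleftrightarrow> (\<forall>l<N. p l < N \<and> p (p l) = l)"

definition Pm :: "nat \<Rightarrow> (nat \<Rightarrow> nat) \<Rightarrow> 'a::field mat" where
  "Pm N p = mat N N (\<lambda>(a,b). if a = p b then 1 else 0)"

lemma Pm_carrier[simp]: "Pm N p \<in> carrier_mat N N" and Pm_dims[simp]: "dim_row (Pm N p) = N" "dim_col (Pm N p) = N"
  by (auto simp: Pm_def)

lemma Pm_index: "a < N \<Longrightarrow> b < N \<Longrightarrow> Pm N p $$ (a,b) = (if a = p b then 1 else 0)"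
  by (simp add: Pm_def)

lemma invo_eq: "invo N p \<Longrightarrow> a < N \<Longrightarrow> k < N \<Longrightarrow> (a = p k) = (k = p a)"
  unfolding invo_def by metis

lemma Pm_mult_left:
  assumes "invo N p" "A \<in> carrier_mat N M" "a < N" "c < M"
  shows "(Pm N p * A) $$ (a,c) = A $$ (p a, c)"
proof -
  have pa: "p a < N" using assms unfolding invo_def by auto
  have "(Pm N p * A) $$ (a,c) = (\<Sum>k\<in>{0..<N}. Pm N p $$ (a,k) * A $$ (k,c))"
    using assms by (simp add: scalar_prod_def)
  also have "\<dots> = (\<Sum>k\<in>{0..<N}. if k = p a then A $$ (k,c) else 0)"
    by (rule sum.cong) (use assms in \<open>auto simp: Pm_index invo_eq\<close>)
  also have "\<dots> = A $$ (p a, c)" using pa by (simp add: sum.delta')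
  finally show ?thesis .
qed

lemma Pm_mult_right:
  assumes "invo N p" "A \<in> carrier_mat M N" "a < M" "c < N"
  shows "(A * Pm N p) $$ (a,c) = A $$ (a, p c)"
proof -
  have pc: "p c < N" using assms unfolding invo_def by auto
  have "(A * Pm N p) $$ (a,c) = (\<Sum>k\<in>{0..<N}. A $$ (a,k) * Pm N p $$ (k,c))"
    using assms by (simp add: scalar_prod_def)
  also have "\<dots> = (\<Sum>k\<in>{0..<N}. if k = p c then A $$ (a,k) else 0)"
    by (rule sum.cong) (use assms in \<open>auto simp: Pm_index invo_eq\<close>)
  also have "\<dots> = A $$ (a, p c)" using pc by (simp add: sum.delta')
  finally show ?thesis .
qed

lemma Pm_conj:
  assumes "invo N p" "A \<in> carrier_mat N N" "a < N" "b < N"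
  shows "(Pm N p * A * Pm N p) $$ (a,b) = A $$ (p a, p b)"
proof -
  have pb: "p b < N" using assms unfolding invo_def by auto
  have "Pm N p * A \<in> carrier_mat N N" using assms by auto
  then have "(Pm N p * A * Pm N p) $$ (a,b) = (Pm N p * A) $$ (a, p b)"
    using assms by (intro Pm_mult_right) auto
  also have "\<dots> = A $$ (p a, p b)" using assms pb by (intro Pm_mult_left) auto
  finally show ?thesis .
qed

lemma Pm_sq: assumes "invo N p" shows "Pm N p * Pm N p = (1\<^sub>m N :: 'a::field mat)"
proof (rule eq_matI)
  fix a b assume "a < dim_row (1\<^sub>m N :: 'a mat)" "b < dim_col (1\<^sub>m N :: 'a mat)"
  then have ab: "a < N" "b < N" by auto
  have "p b < N" using assms ab unfolding invo_def by auto
  have "(Pm N p * Pm N p) $$ (a,b) = (Pm N p :: 'a mat) $$ (p a,b)"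
    using assms ab by (intro Pm_mult_left) auto
  also have "\<dots> = (1\<^sub>m N :: 'a mat) $$ (a,b)"
    using assms ab \<open>p b < N\<close> unfolding invo_def by (auto simp: Pm_index) metis+
  finally show "(Pm N p * Pm N p) $$ (a,b) = (1\<^sub>m N :: 'a mat) $$ (a,b)" .
qed auto

lemma Pm_vec:
  assumes "invo N p" "x \<in> carrier_vec N" "a < N"
  shows "(Pm N p *\<^sub>v x) $ a = x $ (p a)"
proof -
  have pa: "p a < N" using assms unfolding invo_def by auto
  have "(Pm N p *\<^sub>v x) $ a = (\<Sum>k\<in>{0..<N}. Pm N p $$ (a,k) * x $ k)"
    using assms by (simp add: scalar_prod_def)
  also have "\<dots> = (\<Sum>k\<in>{0..<N}. if k = p a then x $ k else 0)"
    by (rule sum.cong) (use assms in \<open>auto simp: Pm_index invo_eq\<close>)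
  also have "\<dots> = x $ (p a)" using pa by (simp add: sum.delta')
  finally show ?thesis .
qed

lemma char2:
  assumes ev: "even (card (UNIV::'a::{field,finite} set))"
  shows "(1::'a) + 1 = 0"
proof (rule ccontr)
  assume h: "(1::'a) + 1 \<noteq> 0"
  have neq: "x \<noteq> - x" if "x \<noteq> 0" for x :: 'a
  proof
    assume "x = - x"
    then have "x + x = x + - x" by (rule arg_cong)
    then have "(1 + 1) * x = 0" by (simp add: distrib_right)
    then show False using h that by simp
  qed
  define C where "C = (\<lambda>x::'a. {x, - x}) ` (UNIV - {0})"
  have U: "\<Union>C = UNIV - {0}"
  proof
    show "\<Union>C \<subseteq> UNIV - {0}" unfolding C_def by auto
    show "UNIV - {0} \<subseteq> \<Union>C" unfolding C_def by blast
  qed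
  have "2 * card C = card (\<Union>C)"
  proof (rule card_partition)
    show "finite C" unfolding C_def by simp
    show "finite (\<Union>C)" by simp
    show "card c = 2" if cC: "c \<in> C" for c
    proof -
      obtain x where "c = {x, -x}" "x \<noteq> 0" using cC unfolding C_def by blast
      then show ?thesis using neq[of x] by simp
    qed
    show "c1 \<inter> c2 = {}" if cc: "c1 \<in> C" "c2 \<in> C" "c1 \<noteq> c2" for c1 c2
    proof (rule ccontr)
      assume ne: "c1 \<inter> c2 \<noteq> {}"
      obtain x y where xy: "c1 = {x, -x}" "c2 = {y, -y}" using cc unfolding C_def by blast
      from ne obtain z where z: "z \<in> c1" "z \<in> c2" by blast
      have "y = x \<or> y = - x" using z xy by (auto simp: neg_equal_iff_equal)
      then have "c1 = c2" using xy by (auto simp: insert_commute)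
      then show False using cc by simp
    qed
  qed
  then have "card (UNIV - {0::'a}) = 2 * card C" using U by simp
  moreover have "card (UNIV - {0::'a}) = card (UNIV::'a set) - 1"
    by (rule card_Diff_singleton) simp
  moreover have "card (UNIV::'a set) \<ge> 1"
    using card_gt_0_iff[of "UNIV::'a set"] by simp
  ultimately have "card (UNIV::'a set) = 2 * card C + 1" by linarith
  with ev show False by simp
qed

definition sg :: "nat \<Rightarrow> nat \<Rightarrow> nat" where "sg n l = (if l < n then l + n else l - n)"

definition SI :: "nat \<Rightarrow> (nat \<Rightarrow> nat) \<Rightarrow> bool" where
  "SI n p \<longleftrightarrow> invo (2*n) p \<and> (\<forall>l<2*n. p (sg n l) = sg n (p l))"

lemma Pm_transpose: assumes "invo N p" shows "transpose_mat (Pm N p) = (Pm N p :: 'a::field mat)"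
proof (rule eq_matI)
  fix a b assume "a < dim_row (Pm N p :: 'a mat)" "b < dim_col (Pm N p :: 'a mat)"
  then have ab: "a < N" "b < N" by auto
  have "(b = p a) = (a = p b)" using invo_eq[OF assms ab(2) ab(1)] by simp
  then show "transpose_mat (Pm N p) $$ (a, b) = (Pm N p :: 'a mat) $$ (a, b)"
    using ab by (simp add: Pm_index)
qed auto

lemma sp_form_char2:
  assumes "(1::'a::field) + 1 = 0" "a < 2*n" "b < 2*n"
  shows "(sp_form n :: 'a mat) $$ (a,b) = (if b = sg n a then 1 else 0)"
proof -
  have m: "(-1::'a) = 1" using assms(1) by (metis add_eq_0_iff)
  show ?thesis using assms m unfolding sp_form_def sg_def by auto
qed

lemma fix_card:
  assumes iv: "invo N p"
  shows "card {x \<in> carrier_vec N. (Pm N p :: 'a::{field,finite} mat) *\<^sub>v x = x}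
         = card (UNIV::'a set) ^ card {l. l < N \<and> l \<le> p l}"
proof -
  define R where "R = {l. l < N \<and> l \<le> p l}"
  define F where "F = {x \<in> carrier_vec N. (Pm N p :: 'a mat) *\<^sub>v x = x}"
  have pl: "\<And>l. l < N \<Longrightarrow> p l < N" "\<And>l. l < N \<Longrightarrow> p (p l) = l" using iv unfolding invo_def by auto
  have minR: "min l (p l) \<in> R" if "l < N" for l
    proof (cases "l \<le> p l")
    case True then show ?thesis using that unfolding R_def by (simp add: min_def)
  next
    case False
    then have "min l (p l) = p l" by simp
    moreover have "p l \<le> p (p l)" using False pl(2)[OF that] by simp
    ultimately show ?thesis using pl(1)[OF that] unfolding R_def by simp
  qed
  have fx: "x $ (p l) = x $ l" if "x \<in> F" "l < N" for x l
  proof -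
    have c: "x \<in> carrier_vec N" and e: "Pm N p *\<^sub>v x = x" using that(1) unfolding F_def by auto
    have "x $ (p l) = (Pm N p *\<^sub>v x) $ l" by (rule Pm_vec[OF iv c that(2), symmetric])
    then show ?thesis using e by simp
  qed
  have "bij_betw (\<lambda>x. restrict (\<lambda>l. x $ l) R) F (R \<rightarrow>\<^sub>E (UNIV::'a set))"
  proof (rule bij_betwI[where g = "\<lambda>f. vec N (\<lambda>l. f (min l (p l)))"])
    show "(\<lambda>x. restrict (\<lambda>l. x $ l) R) \<in> F \<rightarrow> R \<rightarrow>\<^sub>E UNIV" by auto
    show "(\<lambda>f. vec N (\<lambda>l. f (min l (p l)))) \<in> (R \<rightarrow>\<^sub>E UNIV) \<rightarrow> F"
    proof
      fix f :: "nat \<Rightarrow> 'a" assume "f \<in> R \<rightarrow>\<^sub>E UNIV"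
      have "Pm N p *\<^sub>v vec N (\<lambda>l. f (min l (p l))) = vec N (\<lambda>l. f (min l (p l)))"
      proof (rule eq_vecI)
        fix a assume "a < dim_vec (vec N (\<lambda>l. f (min l (p l))))"
        then have a: "a < N" by simp
        have c: "vec N (\<lambda>l. f (min l (p l))) \<in> carrier_vec N" by simp
        have "(Pm N p *\<^sub>v vec N (\<lambda>l. f (min l (p l)))) $ a = vec N (\<lambda>l. f (min l (p l))) $ (p a)"
          by (rule Pm_vec[OF iv c a])
        also have "\<dots> = f (min (p a) (p (p a)))" using pl(1)[OF a] by simp
        also have "min (p a) (p (p a)) = min a (p a)" unfolding pl(2)[OF a] by (rule min.commute)
        also have "f (min a (p a)) = vec N (\<lambda>l. f (min l (p l))) $ a" using a by simp
        finally show "(Pm N p *\<^sub>v vec N (\<lambda>l. f (min l (p l)))) $ a = vec N (\<lambda>l. f (min l (p l))) $ a" .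
      qed simp
      then show "vec N (\<lambda>l. f (min l (p l))) \<in> F" unfolding F_def by simp
    qed
    show "vec N (\<lambda>l. restrict (\<lambda>l. x $ l) R (min l (p l))) = x" if "x \<in> F" for x
    proof (rule eq_vecI)
      fix l assume "l < dim_vec x"
      have "x \<in> carrier_vec N" using that unfolding F_def by blast
      then have dx: "dim_vec x = N" by (rule carrier_vecD)
      then have l: "l < N" using \<open>l < dim_vec x\<close> by simp
      have "vec N (\<lambda>l. restrict (\<lambda>l. x $ l) R (min l (p l))) $ l = restrict (\<lambda>l. x $ l) R (min l (p l))"
        using l by (rule index_vec)
      also have "\<dots> = x $ (min l (p l))"
        using minR[OF l] by (rule restrict_apply')
      also have "\<dots> = x $ l"
      proof (cases "l \<le> p l")
        case True then show ?thesis by (simp add: min_absorb1)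
      next
        case False then have "min l (p l) = p l" by simp
        then show ?thesis using fx[OF that l] by simp
      qed
      finally show "vec N (\<lambda>l. restrict (\<lambda>l. x $ l) R (min l (p l))) $ l = x $ l" .
    next
      have "x \<in> carrier_vec N" using that unfolding F_def by blast
      then have dx: "dim_vec x = N" by (rule carrier_vecD)
      then show "dim_vec (vec N (\<lambda>l. restrict (\<lambda>l. x $ l) R (min l (p l)))) = dim_vec x" by simp
    qed
    show "restrict (\<lambda>l. vec N (\<lambda>l. f (min l (p l))) $ l) R = f" if "f \<in> R \<rightarrow>\<^sub>E UNIV" for f
    proof
      fix l show "restrict (\<lambda>l. vec N (\<lambda>l. f (min l (p l))) $ l) R l = f l"
      proof (cases "l \<in> R")
        case True
        then have "l < N" "l \<le> p l" unfolding R_def by auto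
        then have "min l (p l) = l" by simp
        then show ?thesis using True \<open>l < N\<close> by simp
      next
        case False
        have "f l = undefined" by (rule PiE_arb[OF that False])
        then show ?thesis using False by simp
      qed
    qed
  qed
  then have "card F = card (R \<rightarrow>\<^sub>E (UNIV::'a set))" by (rule bij_betw_same_card)
  also have "\<dots> = card (UNIV::'a set) ^ card R"
    by (simp add: card_PiE R_def)
  finally show ?thesis unfolding F_def R_def .
qed

lemma Pm_Sp:
  assumes c2: "(1::'a::field) + 1 = 0" and si: "SI n p"
  shows "(Pm (2*n) p :: 'a mat) \<in> Sp n"
proof -
  have iv: "invo (2*n) p" using si by (simp add: SI_def)
  have J: "(sp_form n :: 'a mat) \<in> carrier_mat (2*n) (2*n)" by (simp add: sp_form_def)
  have "transpose_mat (Pm (2*n) p) * sp_form n * Pm (2*n) p = (sp_form n :: 'a mat)"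
  proof (rule eq_matI)
    fix a b assume ab: "a < dim_row (sp_form n :: 'a mat)" "b < dim_col (sp_form n :: 'a mat)"
    then have ab: "a < 2*n" "b < 2*n" using J by auto
    have pa: "p a < 2*n" "p b < 2*n" using iv ab unfolding invo_def by auto
    have sga: "sg n a < 2*n" using ab unfolding sg_def by auto
    have "(Pm (2*n) p * sp_form n * Pm (2*n) p) $$ (a,b) = (sp_form n :: 'a mat) $$ (p a, p b)"
      by (rule Pm_conj[OF iv J ab])
    also have "\<dots> = (if p b = sg n (p a) then 1 else 0)" using sp_form_char2[OF c2 pa] .
    also have "(p b = sg n (p a)) = (p b = p (sg n a))" using si ab unfolding SI_def by auto
    also have "\<dots> = (b = sg n a)" using iv ab sga unfolding invo_def by metis
    also have "(if b = sg n a then 1 else 0) = (sp_form n :: 'a mat) $$ (a,b)"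
      using sp_form_char2[OF c2 ab] by simp
    finally show "(transpose_mat (Pm (2*n) p) * sp_form n * Pm (2*n) p) $$ (a,b) = (sp_form n :: 'a mat) $$ (a,b)"
      unfolding Pm_transpose[OF iv] .
  qed (use J in auto)
  then show ?thesis unfolding Sp_def by auto
qed

lemma SI_props:
  assumes "SI n p" "l < 2*n"
  shows "p l < 2*n" "p (p l) = l" "p (sg n l) = sg n (p l)"
  using assms unfolding SI_def invo_def by auto

lemma sg_lt: "l < 2*n \<Longrightarrow> sg n l < 2*n" and sg_sg: "l < 2*n \<Longrightarrow> sg n (sg n l) = l"
  unfolding sg_def by auto

lemma Pm_invertible:
  assumes "invo N p" shows "invertible_mat (Pm N p :: 'a::field mat)"
  unfolding invertible_mat_def inverts_mat_def using Pm_sq[OF assms]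
  by (auto simp: square_mat.simps)

lemma quad_Pm:
  assumes si: "SI n p" and x: "x \<in> carrier_vec (2*n)"
  shows "quad_plus n (Pm (2*n) p *\<^sub>v x) = quad_plus n (x :: 'a::field vec)"
proof -
  have iv: "invo (2*n) p" using si unfolding SI_def by simp
  define g where "g l = x $ l * x $ (sg n l)" for l
  define \<rho> where "\<rho> i = (if p i < n then p i else p i - n)" for i
  have gs: "g (sg n l) = g l" if "l < 2*n" for l
    using sg_sg[OF that] unfolding g_def by (simp add: mult.commute)
  have t1: "(Pm (2*n) p *\<^sub>v x) $ i * (Pm (2*n) p *\<^sub>v x) $ (n + i) = g (\<rho> i)" if i: "i < n" for i
  proof -
    have i2: "i < 2*n" "n + i < 2*n" using i by auto
    have e1: "(Pm (2*n) p *\<^sub>v x) $ i = x $ (p i)" by (rule Pm_vec[OF iv x i2(1)])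
    have e2: "(Pm (2*n) p *\<^sub>v x) $ (n+i) = x $ (p (n+i))" by (rule Pm_vec[OF iv x i2(2)])
    have "sg n i = n + i" using i unfolding sg_def by simp
    then have "p (n+i) = sg n (p i)" using SI_props(3)[OF si i2(1)] by simp
    then have "(Pm (2*n) p *\<^sub>v x) $ i * (Pm (2*n) p *\<^sub>v x) $ (n + i) = g (p i)"
      using e1 e2 unfolding g_def by simp
    also have "g (p i) = g (\<rho> i)"
    proof (cases "p i < n")
      case True then show ?thesis unfolding \<rho>_def by simp
    next
      case False
      then have "\<rho> i = sg n (p i)" unfolding \<rho>_def sg_def by simp
      then show ?thesis using gs SI_props(1)[OF si i2(1)] by simp
    qed
    finally show ?thesis .
  qed
  have inj: "inj_on \<rho> {..<n}"
  proof
    fix i i' assume ii: "i \<in> {..<n}" "i' \<in> {..<n}" "\<rho> i = \<rho> i'"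
    then have i2: "i < 2*n" "i' < 2*n" by auto
    note P = SI_props[OF si i2(1)] SI_props[OF si i2(2)]
    show "i = i'"
    proof (cases "p i < n"; cases "p i' < n")
      assume "p i < n" "p i' < n"
      then have "p i = p i'" using ii unfolding \<rho>_def by simp
      then show ?thesis using P by metis
    next
      assume a: "p i < n" "\<not> p i' < n"
      then have "p i = sg n (p i')" using ii unfolding \<rho>_def sg_def by simp
      then have "p (p i) = p (sg n (p i'))" by simp
      also have "\<dots> = sg n (p (p i'))" by (rule SI_props(3)[OF si SI_props(1)[OF si i2(2)]])
      finally have "i = sg n i'" using P by simp
      then have "i = i' + n" using ii unfolding sg_def by simp
      then show ?thesis using ii by simp
    next
      assume a: "\<not> p i < n" "p i' < n"
      then have "p i' = sg n (p i)" using ii unfolding \<rho>_def sg_def by simp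
      then have "p (p i') = p (sg n (p i))" by simp
      also have "\<dots> = sg n (p (p i))" by (rule SI_props(3)[OF si SI_props(1)[OF si i2(1)]])
      finally have "i' = sg n i" using P by simp
      then have "i' = i + n" using ii unfolding sg_def by simp
      then show ?thesis using ii by simp
    next
      assume a: "\<not> p i < n" "\<not> p i' < n"
      then have "p i = p i'" using ii unfolding \<rho>_def by simp
      then show ?thesis using P by metis
    qed
  qed
  have sub: "\<rho> ` {..<n} \<subseteq> {..<n}"
  proof
    fix y assume "y \<in> \<rho> ` {..<n}"
    then obtain i where "i < n" "y = \<rho> i" by auto
    then show "y \<in> {..<n}" using SI_props(1)[OF si, of i] unfolding \<rho>_def by auto
  qed
  have img: "\<rho> ` {..<n} = {..<n}" by (rule endo_inj_surj[OF _ sub inj]) simp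
  have "quad_plus n (Pm (2*n) p *\<^sub>v x) = (\<Sum>i<n. g (\<rho> i))"
    unfolding quad_plus_def by (rule sum.cong) (use t1 in blast)+
  also have "\<dots> = sum g (\<rho> ` {..<n})" using sum.reindex[OF inj, of g] by simp
  also have "\<dots> = (\<Sum>i<n. g i)" unfolding img ..
  also have "\<dots> = quad_plus n x"
    unfolding quad_plus_def g_def sg_def by (rule sum.cong) (simp_all add: add.commute)
  finally show ?thesis .
qed

lemma Pm_O_plus:
  assumes si: "SI n p"
  shows "(Pm (2*n) p :: 'a::field mat) \<in> O_plus n"
  unfolding O_plus_def using quad_Pm[OF si] Pm_invertible[of "2*n" p] si unfolding SI_def by auto

lemma Pm_Omega:
  assumes si: "SI n p" and ev: "even (card {l. l < 2*n \<and> l \<le> p l})"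
  shows "(Pm (2*n) p :: 'a::{field,finite} mat) \<in> Omega_plus n"
  unfolding Omega_plus_def using Pm_O_plus[OF si] fix_card[of "2*n" p] si ev unfolding SI_def by auto

definition Dg :: "nat \<Rightarrow> (nat \<Rightarrow> 'a::field) \<Rightarrow> 'a mat" where
  "Dg n t = mat (2*n) (2*n) (\<lambda>(i,j). if i = j then (if i < n then t i else inverse (t (i - n))) else 0)"

lemma torus_eq: "split_torus n = {Dg n t | t. \<forall>i<n. t i \<noteq> (0::'a::field)}"
  unfolding split_torus_def Dg_def by simp

lemma Dg_carrier[simp]: "Dg n t \<in> carrier_mat (2*n) (2*n)"
  by (simp add: Dg_def)

definition dd :: "nat \<Rightarrow> (nat \<Rightarrow> 'a::field) \<Rightarrow> nat \<Rightarrow> 'a" where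
  "dd n t y = (if y < n then t y else inverse (t (y - n)))"

lemma Dg_index: "a < 2*n \<Longrightarrow> b < 2*n \<Longrightarrow> Dg n t $$ (a,b) = (if a = b then dd n t a else 0)"
  by (simp add: Dg_def dd_def)

lemma dd_sg: "y < 2*n \<Longrightarrow> dd n t (sg n y) = inverse (dd n t y)"
  unfolding dd_def sg_def by auto

lemma Dg_cong: "(\<And>l. l < n \<Longrightarrow> t l = s l) \<Longrightarrow> Dg n t = Dg n s"
  unfolding Dg_def by (intro eq_matI) auto

definition tw :: "nat \<Rightarrow> (nat \<Rightarrow> nat) \<Rightarrow> (nat \<Rightarrow> 'a::field) \<Rightarrow> nat \<Rightarrow> 'a" where
  "tw n p t l = (if p l < n then t (p l) else inverse (t (p l - n)))"

lemma Dg_conj: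
  assumes si: "SI n p"
  shows "Pm (2*n) p * Dg n t * Pm (2*n) p = Dg n (tw n p t)"
proof (rule eq_matI)
  have iv: "invo (2*n) p" using si unfolding SI_def by simp
  fix a b assume "a < dim_row (Dg n (tw n p t))" "b < dim_col (Dg n (tw n p t))"
  then have ab: "a < 2*n" "b < 2*n" by (auto simp: Dg_def)
  have pab: "p a < 2*n" "p b < 2*n" using SI_props(1)[OF si] ab by auto
  have "(Pm (2*n) p * Dg n t * Pm (2*n) p) $$ (a,b) = Dg n t $$ (p a, p b)"
    by (rule Pm_conj[OF iv Dg_carrier ab])
  also have "\<dots> = (if p a = p b then dd n t (p a) else 0)" by (rule Dg_index[OF pab])
  also have "(p a = p b) = (a = b)" using SI_props(2)[OF si] ab by metis
  also have "dd n t (p a) = dd n (tw n p t) a"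
  proof (cases "a < n")
    case True then show ?thesis unfolding dd_def tw_def by simp
  next
    case False
    then have a': "a - n < 2*n" "sg n (a - n) = a" using ab unfolding sg_def by auto
    have "p a = sg n (p (a - n))" using SI_props(3)[OF si a'(1)] a'(2) by simp
    then have "dd n t (p a) = inverse (dd n t (p (a - n)))"
      using dd_sg SI_props(1)[OF si a'(1)] by simp
    also have "\<dots> = dd n (tw n p t) a" using False unfolding dd_def tw_def by simp
    finally show ?thesis .
  qed
  also have "(if a = b then dd n (tw n p t) a else 0) = Dg n (tw n p t) $$ (a,b)"
    by (rule Dg_index[OF ab, symmetric])
  finally show "(Pm (2*n) p * Dg n t * Pm (2*n) p) $$ (a,b) = Dg n (tw n p t) $$ (a,b)" .
qed (auto simp: Dg_def)

lemma tw_nz: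
  assumes si: "SI n p" and t: "\<forall>i<n. t i \<noteq> (0::'a::field)"
  shows "\<forall>i<n. tw n p t i \<noteq> 0"
proof (intro allI impI)
  fix i assume "i < n"
  then have "p i < 2*n" using SI_props(1)[OF si, of i] by simp
  then show "tw n p t i \<noteq> 0" using t unfolding tw_def by auto
qed

lemma Pm_norm:
  assumes si: "SI n p" and PG: "(Pm (2*n) p :: 'a::field mat) \<in> G"
  shows "Pm (2*n) p \<in> normalizer_mat G (split_torus n)"
proof -
  have iv: "invo (2*n) p" using si unfolding SI_def by simp
  let ?P = "Pm (2*n) p :: 'a mat"
  have sq: "?P * ?P = 1\<^sub>m (2*n)" by (rule Pm_sq[OF iv])
  have sub: "(\<lambda>t. ?P * t * ?P) ` split_torus n \<subseteq> split_torus n"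
  proof
    fix y assume "y \<in> (\<lambda>t. ?P * t * ?P) ` split_torus n"
    then obtain t where t: "\<forall>i<n. t i \<noteq> 0" "y = ?P * Dg n t * ?P" unfolding torus_eq by auto
    then have "y = Dg n (tw n p t)" using Dg_conj[OF si] by simp
    then show "y \<in> split_torus n" unfolding torus_eq using tw_nz[OF si t(1)] by auto
  qed
  have "(split_torus n :: 'a mat set) \<subseteq> (\<lambda>t. ?P * t * ?P) ` split_torus n"
  proof
    fix y :: "'a mat" assume y: "y \<in> split_torus n"
    then have yc: "y \<in> carrier_mat (2*n) (2*n)" unfolding torus_eq by auto
    have Pc: "?P \<in> carrier_mat (2*n) (2*n)" by simp
    have c1: "?P * y \<in> carrier_mat (2*n) (2*n)" by (rule mult_carrier_mat[OF Pc yc])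
    have c2: "?P * y * ?P \<in> carrier_mat (2*n) (2*n)" by (rule mult_carrier_mat[OF c1 Pc])
    have "?P * (?P * y * ?P) * ?P = ?P * (?P * y * ?P * ?P)" by (rule assoc_mult_mat[OF Pc c2 Pc])
    also have "?P * y * ?P * ?P = ?P * y * (?P * ?P)" by (rule assoc_mult_mat[OF c1 Pc Pc])
    also have "\<dots> = ?P * y" unfolding sq by (rule right_mult_one_mat[OF c1])
    also have "?P * (?P * y) = ?P * ?P * y" by (rule assoc_mult_mat[OF Pc Pc yc, symmetric])
    also have "\<dots> = y" unfolding sq by (rule left_mult_one_mat[OF yc])
    finally have "y = ?P * (?P * y * ?P) * ?P" by simp
    moreover have "?P * y * ?P \<in> split_torus n" using sub y by blast
    ultimately show "y \<in> (\<lambda>t. ?P * t * ?P) ` split_torus n" by blast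
  qed
  then have "(\<lambda>t. ?P * t * ?P) ` split_torus n = split_torus n" using sub by blast
  then show ?thesis unfolding normalizer_mat_def using PG sq by auto
qed

lemma orbit_mem:
  assumes si: "SI n p" and PG: "(Pm (2*n) p :: 'a::field mat) \<in> G"
  shows "restrict (\<lambda>t. \<beta> (Pm (2*n) p * t * Pm (2*n) p)) (split_torus n) \<in> weyl_orbit G (split_torus n) \<beta>"
proof -
  have iv: "invo (2*n) p" using si unfolding SI_def by simp
  show ?thesis unfolding weyl_orbit_def mem_Collect_eq
    apply (rule exI[of _ "Pm (2*n) p"])+
    using Pm_norm[OF si PG] PG Pm_sq[OF iv] by simp
qed

definition Ei :: "nat \<Rightarrow> nat \<Rightarrow> 'a::field \<Rightarrow> 'a mat" where
  "Ei n i x = Dg n (\<lambda>l. if l = i then x else 1)"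

lemma Ei_torus: "i < n \<Longrightarrow> x \<noteq> 0 \<Longrightarrow> Ei n i x \<in> split_torus n"
  unfolding torus_eq Ei_def by (auto intro!: exI[of _ "\<lambda>l. if l = i then x else 1"] split: if_splits)

lemma conj_Ei:
  assumes si: "SI n p" and i: "i < n"
  shows "Pm (2*n) p * Ei n i x * Pm (2*n) p = (if p i < n then Ei n (p i) x else Ei n (p i - n) (inverse x))"
proof -
  have i2: "i < 2*n" using i by simp
  note P = SI_props[OF si i2]
  have "Pm (2*n) p * Ei n i x * Pm (2*n) p = Dg n (tw n p (\<lambda>l. if l = i then x else 1))"
    unfolding Ei_def by (rule Dg_conj[OF si])
  also have "\<dots> = (if p i < n then Ei n (p i) x else Ei n (p i - n) (inverse x))"
  proof (cases "p i < n")
    case True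
    have "Dg n (tw n p (\<lambda>l. if l = i then x else 1)) = Ei n (p i) x" unfolding Ei_def
    proof (rule Dg_cong)
      fix l assume l: "l < n"
      then have l2: "l < 2*n" by simp
      note Q = SI_props[OF si l2]
      show "tw n p (\<lambda>l. if l = i then x else 1) l = (if l = p i then x else 1)"
      proof (cases "p l < n")
        case True
        have "(p l = i) = (l = p i)" using Q P by metis
        then show ?thesis using True unfolding tw_def by simp
      next
        case False
        have "l \<noteq> p i" using False P True i by metis
        moreover have "p l - n \<noteq> i"
        proof
          assume "p l - n = i"
          then have "p l = sg n i" using False i unfolding sg_def by simp
          then have "l = p (sg n i)" using Q by metis
          then have "l = sg n (p i)" using P by simp
          then show False using True l unfolding sg_def by simp
        qed
        ultimately show ?thesis using False unfolding tw_def by simp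
      qed
    qed
    then show ?thesis using True by simp
  next
    case False
    have "Dg n (tw n p (\<lambda>l. if l = i then x else 1)) = Ei n (p i - n) (inverse x)" unfolding Ei_def
    proof (rule Dg_cong)
      fix l assume l: "l < n"
      then have l2: "l < 2*n" by simp
      note Q = SI_props[OF si l2]
      have spi: "sg n (p i) = p i - n" using False unfolding sg_def by simp
      show "tw n p (\<lambda>l. if l = i then x else 1) l = (if l = p i - n then inverse x else 1)"
      proof (cases "p l < n")
        case True
        have "p l \<noteq> i" using True False P Q l by metis
        moreover have "l \<noteq> p i - n"
        proof
          assume "l = p i - n"
          then have "p l = p (sg n (p i))" using spi by simp
          also have "\<dots> = sg n (p (p i))" by (rule SI_props(3)[OF si P(1)])
          also have "\<dots> = i + n" using P i unfolding sg_def by simp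
          finally show False using True by simp
        qed
        ultimately show ?thesis using True unfolding tw_def by simp
      next
        case f2: False
        have "(p l - n = i) = (l = p i - n)"
        proof
          assume "p l - n = i"
          then have "p l = sg n i" using f2 i unfolding sg_def by simp
          then have "l = p (sg n i)" using Q by metis
          then show "l = p i - n" using P spi by simp
        next
          assume "l = p i - n"
          then have "p l = p (sg n (p i))" using spi by simp
          also have "\<dots> = sg n (p (p i))" by (rule SI_props(3)[OF si P(1)])
          also have "\<dots> = i + n" using P i unfolding sg_def by simp
          finally show "p l - n = i" by simp
        qed
        then show ?thesis using f2 unfolding tw_def by simp
      qed
    qed
    then show ?thesis using False by simp
  qed
  finally show ?thesis .
qed

lemma Dg_mult: "Dg n t * Dg n s = Dg n (\<lambda>l. t l * (s l :: 'a::field))"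
proof (rule eq_matI)
  fix a b assume "a < dim_row (Dg n (\<lambda>l. t l * s l))" "b < dim_col (Dg n (\<lambda>l. t l * s l))"
  then have ab: "a < 2*n" "b < 2*n" by (auto simp: Dg_def)
  have "(Dg n t * Dg n s) $$ (a,b) = (\<Sum>k\<in>{0..<2*n}. Dg n t $$ (a,k) * Dg n s $$ (k,b))"
    using ab by (simp add: scalar_prod_def Dg_def)
  also have "\<dots> = (\<Sum>k\<in>{0..<2*n}. if k = a then dd n t a * Dg n s $$ (a,b) else 0)"
    by (rule sum.cong) (use ab in \<open>auto simp: Dg_index\<close>)
  also have "\<dots> = dd n t a * Dg n s $$ (a,b)" using ab by (simp add: sum.delta')
  also have "\<dots> = Dg n (\<lambda>l. t l * s l) $$ (a,b)"
    using ab by (simp add: Dg_index dd_def inverse_mult_distrib)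
  finally show "(Dg n t * Dg n s) $$ (a,b) = Dg n (\<lambda>l. t l * s l) $$ (a,b)" .
qed (auto simp: Dg_def)

lemma Ei_mult: "Ei n i x * Ei n i y = Ei n i (x * (y::'a::field))"
  unfolding Ei_def Dg_mult by (rule Dg_cong) auto

lemma sq_inj_char2:
  assumes c2: "(1::'a::field) + 1 = 0" and eq: "x * x = y * (y::'a)"
  shows "x = y"
proof -
  have m: "z + z = 0" for z :: 'a
  proof -
    have "z + z = (1 + 1) * z" by (simp add: distrib_right)
    then show ?thesis using c2 by simp
  qed
  have "(x + y) * (x + y) = x * x + y * y + (x * y + x * y)" by (simp add: algebra_simps)
  also have "\<dots> = x * x + y * y" by (metis m add_0_right)
  also have "\<dots> = 0" by (metis eq m)
  finally have "x + y = 0" by simp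
  then have "x = - y" by (simp add: eq_neg_iff_add_eq_0)
  also have "- y = y" using m[of y] by (simp add: minus_unique)
  finally show ?thesis .
qed

lemma sq_surj_char2:
  assumes c2: "(1::'a::{field,finite}) + 1 = 0" and y: "y \<noteq> (0::'a)"
  shows "\<exists>x. x \<noteq> 0 \<and> x * x = y"
proof -
  have "inj (\<lambda>x::'a. x * x)" by (rule injI) (rule sq_inj_char2[OF c2])
  then have "surj (\<lambda>x::'a. x * x)" using finite_UNIV_inj_surj[of "\<lambda>x::'a. x * x"] by simp
  then obtain x where "y = x * x" by blast
  then show ?thesis using y by auto
qed

locale chr =
  fixes n :: nat and \<beta> :: "'a::{field,finite} mat \<Rightarrow> complex"
  assumes lc: "linear_char (split_torus n) \<beta>" and c2: "(1::'a) + 1 = 0"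
begin

definition b :: "nat \<Rightarrow> 'a \<Rightarrow> complex" where "b i x = \<beta> (Ei n i x)"

definition chi :: "(nat \<Rightarrow> nat) \<Rightarrow> 'a mat \<Rightarrow> complex" where
  "chi p = restrict (\<lambda>t. \<beta> (Pm (2*n) p * t * Pm (2*n) p)) (split_torus n)"

lemma beta_mult: "s \<in> split_torus n \<Longrightarrow> t \<in> split_torus n \<Longrightarrow> \<beta> (s * t) = \<beta> s * \<beta> t"
  using lc unfolding linear_char_def by auto

lemma beta_nz: "t \<in> split_torus n \<Longrightarrow> \<beta> t \<noteq> 0"
  using lc unfolding linear_char_def by auto

lemma b_mult: "i < n \<Longrightarrow> x \<noteq> 0 \<Longrightarrow> y \<noteq> 0 \<Longrightarrow> b i (x * y) = b i x * b i y"
  unfolding b_def using beta_mult[OF Ei_torus Ei_torus] Ei_mult by metis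

lemma b_one: "i < n \<Longrightarrow> b i 1 = 1"
proof -
  assume i: "i < n"
  have "b i 1 = b i 1 * b i 1" using b_mult[OF i, of 1 1] by simp
  moreover have "b i 1 \<noteq> 0" unfolding b_def using beta_nz[OF Ei_torus[OF i]] by simp
  ultimately show ?thesis by (metis mult_cancel_left1)
qed

lemma b_inv: "i < n \<Longrightarrow> x \<noteq> 0 \<Longrightarrow> b i x * b i (inverse x) = 1"
  using b_mult[of i x "inverse x"] b_one by simp

lemma all_triv:
  assumes h: "\<forall>i<n. \<forall>x. x \<noteq> 0 \<longrightarrow> b i x = 1" and np: "n > 0"
  shows "\<forall>t\<in>split_torus n. \<beta> t = 1"
proof
  fix s :: "'a mat" assume "s \<in> split_torus n"
  then obtain t where t: "s = Dg n t" "\<forall>i<n. t i \<noteq> 0" unfolding torus_eq by auto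
  have "m \<le> n \<Longrightarrow> \<beta> (Dg n (\<lambda>l. if l < m then t l else 1)) = 1" for m
  proof (induction m)
    case 0
    have "Dg n (\<lambda>l. if l < 0 then t l else 1) = Ei n 0 1" unfolding Ei_def by (rule Dg_cong) simp
    then show ?case using h np unfolding b_def by simp
  next
    case (Suc m)
    then have m: "m < n" by simp
    have "Dg n (\<lambda>l. if l < Suc m then t l else 1) = Dg n (\<lambda>l. if l < m then t l else 1) * Ei n m (t m)"
      unfolding Ei_def Dg_mult by (rule Dg_cong) auto
    moreover have "Dg n (\<lambda>l. if l < m then t l else 1) \<in> split_torus n"
      unfolding torus_eq using t(2) by (auto intro!: exI[of _ "\<lambda>l. if l < m then t l else 1"] split: if_splits)
    moreover have "Ei n m (t m) \<in> split_torus n" by (rule Ei_torus[OF m]) (use t(2) m in auto)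
    ultimately show ?case using beta_mult Suc h t(2) m unfolding b_def by simp
  qed
  from this[of n] have "\<beta> (Dg n (\<lambda>l. if l < n then t l else 1)) = 1" by simp
  moreover have "Dg n (\<lambda>l. if l < n then t l else 1) = Dg n t" by (rule Dg_cong) simp
  ultimately show "\<beta> s = 1" using t by simp
qed

lemma K2:
  assumes i: "i < n" and nt: "\<exists>x. x \<noteq> 0 \<and> b i x \<noteq> 1"
  shows "\<exists>x. x \<noteq> 0 \<and> b i x \<noteq> b i (inverse x)"
proof (rule ccontr)
  assume "\<not> ?thesis"
  then have e: "\<And>x. x \<noteq> 0 \<Longrightarrow> b i x = b i (inverse x)" by blast
  have "b i y = 1" if y: "y \<noteq> 0" for y
  proof -
    obtain x where x: "x \<noteq> 0" "x * x = y" using sq_surj_char2[OF c2 y] by blast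
    have "b i y = b i x * b i x" using b_mult[OF i x(1) x(1)] x by simp
    also have "\<dots> = b i x * b i (inverse x)" using e[OF x(1)] by simp
    also have "\<dots> = 1" using b_inv[OF i x(1)] .
    finally show ?thesis .
  qed
  then show False using nt by blast
qed

lemma chi_eval:
  assumes si: "SI n p" and i: "i < n" and x: "x \<noteq> 0"
  shows "chi p (Ei n i x) = (if p i < n then b (p i) x else b (p i - n) (inverse x))"
proof -
  have e: "Pm (2*n) p * Ei n i x * Pm (2*n) p = (if p i < n then Ei n (p i) x else Ei n (p i - n) (inverse x))"
    by (rule conj_Ei[OF si i])
  have "chi p (Ei n i x) = \<beta> (Pm (2*n) p * Ei n i x * Pm (2*n) p)"
    unfolding chi_def using Ei_torus[OF i x] by simp
  also have "\<dots> = (if p i < n then b (p i) x else b (p i - n) (inverse x))"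
    unfolding e b_def by simp
  finally show ?thesis .
qed

lemma chi_neq:
  assumes "SI n p" "SI n p'" "i < n" "x \<noteq> 0"
    "(if p i < n then b (p i) x else b (p i - n) (inverse x)) \<noteq> (if p' i < n then b (p' i) x else b (p' i - n) (inverse x))"
  shows "chi p \<noteq> chi p'"
  using chi_eval[OF assms(1,3,4)] chi_eval[OF assms(2,3,4)] assms(5) by metis

end

definition fl :: "nat \<Rightarrow> nat set \<Rightarrow> nat \<Rightarrow> nat" where
  "fl n S l = (if l < n then (if l \<in> S then l + n else l) else (if l - n \<in> S then l - n else l))"

definition tr :: "nat \<Rightarrow> nat \<Rightarrow> nat \<Rightarrow> nat" where
  "tr i j l = (if l = i then j else if l = j then i else l)"

definition sw :: "nat \<Rightarrow> nat \<Rightarrow> nat \<Rightarrow> nat \<Rightarrow> nat" where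
  "sw n i j l = (if l < n then tr i j l else tr i j (l - n) + n)"

definition swn :: "nat \<Rightarrow> nat \<Rightarrow> nat \<Rightarrow> nat \<Rightarrow> nat" where
  "swn n i j l = (if l < n then (if l = i then j + n else if l = j then i + n else l)
      else (if l - n = i then j else if l - n = j then i else l))"

lemma SI_fl: "SI n (fl n S)"
  unfolding SI_def invo_def fl_def sg_def by auto

lemma SI_sw: "i < n \<Longrightarrow> j < n \<Longrightarrow> SI n (sw n i j)"
  unfolding SI_def invo_def sw_def tr_def sg_def by auto

lemma SI_swn: "i < n \<Longrightarrow> j < n \<Longrightarrow> i \<noteq> j \<Longrightarrow> SI n (swn n i j)"
  unfolding SI_def invo_def swn_def sg_def by auto

lemma R_fl:
  assumes "S \<subseteq> {..<n}"
  shows "card {l. l < 2*n \<and> l \<le> fl n S l} = 2*n - card S"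
proof -
  have "{l. l < 2*n \<and> l \<le> fl n S l} = {0..<2*n} - (\<lambda>l. l + n) ` S"
  proof (rule Set.set_eqI)
    fix l
    show "(l \<in> {l. l < 2*n \<and> l \<le> fl n S l}) = (l \<in> {0..<2*n} - (\<lambda>l. l + n) ` S)"
    proof (cases "l < n")
      case True
      then have "l \<notin> (\<lambda>l. l + n) ` S" by auto
      then show ?thesis using True unfolding fl_def by auto
    next
      case False
      have im: "(l \<in> (\<lambda>l. l + n) ` S) = (l - n \<in> S)"
      proof
        assume "l \<in> (\<lambda>l. l + n) ` S" then obtain k where "k \<in> S" "l = k + n" by auto
        then show "l - n \<in> S" by simp
      next
        assume "l - n \<in> S" then have "(l - n) + n \<in> (\<lambda>l. l + n) ` S" by blast
        then show "l \<in> (\<lambda>l. l + n) ` S" using False by simp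
      qed
      show ?thesis using im False unfolding fl_def by (simp only: mem_Collect_eq Diff_iff atLeastLessThan_iff) auto
    qed
  qed
  moreover have "card ((\<lambda>l. l + n) ` S) = card S" by (rule card_image) (simp add: inj_on_def)
  moreover have "(\<lambda>l. l + n) ` S \<subseteq> {0..<2*n}" using assms by auto
  moreover have "finite S" using assms finite_subset by blast
  ultimately show ?thesis by (simp add: card_Diff_subset)
qed

lemma R_sw:
  assumes "i < n" "j < n" "i \<noteq> j"
  shows "card {l. l < 2*n \<and> l \<le> sw n i j l} = 2*n - 2"
proof -
  have "{l. l < 2*n \<and> l \<le> sw n i j l} = {0..<2*n} - {max i j, max i j + n}"
  proof (rule Set.set_eqI)
    fix l
    show "(l \<in> {l. l < 2*n \<and> l \<le> sw n i j l}) = (l \<in> {0..<2*n} - {max i j, max i j + n})"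
    proof (cases "l < n")
      case True then show ?thesis using assms unfolding sw_def tr_def max_def by auto
    next
      case False
      then have "sw n i j l = tr i j (l - n) + n" unfolding sw_def by simp
      moreover have "(l \<le> tr i j (l - n) + n) = (l - n \<le> tr i j (l - n))" using False by linarith
      moreover have "(l - n \<le> tr i j (l - n)) = (l - n \<noteq> max i j)"
        using assms unfolding tr_def max_def by auto
      moreover have "(l - n \<noteq> max i j) = (l \<noteq> max i j + n)" using False by linarith
      moreover have "l \<noteq> max i j" using False assms by (simp add: max_def)
      ultimately show ?thesis by auto
    qed
  qed
  moreover have "card {max i j, max i j + n} = 2" using assms by simp
  moreover have "{max i j, max i j + n} \<subseteq> {0..<2*n}" using assms by auto
  ultimately show ?thesis by (simp add: card_Diff_subset)
qed

lemma R_swn: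
  assumes "i < n" "j < n" "i \<noteq> j"
  shows "card {l. l < 2*n \<and> l \<le> swn n i j l} = 2*n - 2"
proof -
  have "{l. l < 2*n \<and> l \<le> swn n i j l} = {0..<2*n} - {i + n, j + n}"
  proof (rule Set.set_eqI)
    fix l
    show "(l \<in> {l. l < 2*n \<and> l \<le> swn n i j l}) = (l \<in> {0..<2*n} - {i + n, j + n})"
    proof (cases "l < n")
      case True then show ?thesis using assms unfolding swn_def by auto
    next
      case False
      then have "l = (l - n) + n" by simp
      then show ?thesis using False assms unfolding swn_def by (cases "l - n = i"; cases "l - n = j") auto
    qed
  qed
  moreover have "card {i + n, j + n} = 2" using assms by simp
  moreover have "{i + n, j + n} \<subseteq> {0..<2*n}" using assms by auto
  ultimately show ?thesis by (simp add: card_Diff_subset)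
qed

context chr begin

definition wv :: "(nat \<Rightarrow> nat) \<Rightarrow> nat \<Rightarrow> 'a \<Rightarrow> complex" where
  "wv p l x = (if p l < n then b (p l) x else b (p l - n) (inverse x))"

lemma chi_neq': "SI n p \<Longrightarrow> SI n p' \<Longrightarrow> l < n \<Longrightarrow> x \<noteq> 0 \<Longrightarrow> wv p l x \<noteq> wv p' l x \<Longrightarrow> chi p \<noteq> chi p'"
  using chi_neq unfolding wv_def by blast

lemma wv_fl: "l < n \<Longrightarrow> wv (fl n S) l x = (if l \<in> S then b l (inverse x) else b l x)"
  unfolding wv_def fl_def by auto

lemma wv_sw: "l < n \<Longrightarrow> i < n \<Longrightarrow> j < n \<Longrightarrow> wv (sw n i j) l x = b (tr i j l) x"
  unfolding wv_def sw_def tr_def by auto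

lemma wv_swn: "l < n \<Longrightarrow> wv (swn n i j) l x = (if l = i then b j (inverse x) else if l = j then b i (inverse x) else b l x)"
  unfolding wv_def swn_def by auto

end

lemma finite_carrier_mat: "finite (carrier_mat m k :: 'a::finite mat set)"
proof -
  have "carrier_mat m k \<subseteq> (\<lambda>f. mat m k f) ` (({..<m} \<times> {..<k}) \<rightarrow>\<^sub>E (UNIV :: 'a set))"
  proof
    fix A :: "'a mat" assume A: "A \<in> carrier_mat m k"
    have "A = mat m k (restrict (\<lambda>ij. A $$ ij) ({..<m} \<times> {..<k}))"
    proof -
      have d: "dim_row A = m" "dim_col A = k" using A by auto
      show ?thesis by (rule eq_matI) (simp_all add: d)
    qed
    moreover have "restrict (\<lambda>ij. A $$ ij) ({..<m} \<times> {..<k}) \<in> ({..<m} \<times> {..<k}) \<rightarrow>\<^sub>E (UNIV::'a set)" by simp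
    ultimately show "A \<in> (\<lambda>f. mat m k f) ` (({..<m} \<times> {..<k}) \<rightarrow>\<^sub>E UNIV)" by (metis image_eqI)
  qed
  moreover have "finite ((\<lambda>f. mat m k f) ` (({..<m} \<times> {..<k}) \<rightarrow>\<^sub>E (UNIV :: 'a set)))"
    by (intro finite_imageI finite_PiE) auto
  ultimately show ?thesis by (rule finite_subset)
qed

lemma finite_orbit:
  assumes "G \<subseteq> carrier_mat N N"
  shows "finite (weyl_orbit G T (\<beta> :: 'a::{field,finite} mat \<Rightarrow> complex))"
proof -
  have "weyl_orbit G T \<beta> \<subseteq> (\<lambda>(g,h). restrict (\<lambda>t. \<beta> (h * t * g)) T) ` (G \<times> G)"
  proof
    fix f assume "f \<in> weyl_orbit G T \<beta>"
    then obtain g h where gh: "f = restrict (\<lambda>t. \<beta> (h * t * g)) T" "g \<in> normalizer_mat G T" "h \<in> G"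
      unfolding weyl_orbit_def by blast
    have "g \<in> G" using gh(2) unfolding normalizer_mat_def by blast
    then have "(g,h) \<in> G \<times> G" using gh(3) by blast
    then show "f \<in> (\<lambda>(g,h). restrict (\<lambda>t. \<beta> (h * t * g)) T) ` (G \<times> G)"
      by (rule rev_image_eqI) (simp add: gh(1))
  qed
  moreover have "finite G" using finite_subset[OF assms finite_carrier_mat] .
  then have "finite ((\<lambda>(g,h). restrict (\<lambda>t. \<beta> (h * t * g)) T) ` (G \<times> G))" by simp
  ultimately show ?thesis by (rule finite_subset)
qed

lemma Sp_carrier: "Sp n \<subseteq> carrier_mat (2*n) (2*n)" unfolding Sp_def by auto
lemma Omega_carrier: "Omega_plus n \<subseteq> carrier_mat (2*n) (2*n)" unfolding Omega_plus_def O_plus_def by auto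

definition sd :: "nat \<Rightarrow> nat set \<Rightarrow> nat set" where
  "sd i A = (if i \<in> A then A - {i} else insert i A)"

context chr begin

definition Kset :: "nat set" where "Kset = {i. i < n \<and> (\<exists>x. x \<noteq> 0 \<and> b i x \<noteq> 1)}"

lemma Kout: "l < n \<Longrightarrow> l \<notin> Kset \<Longrightarrow> x \<noteq> 0 \<Longrightarrow> b l x = 1"
  unfolding Kset_def by auto

lemma Kin1: "l \<in> Kset \<Longrightarrow> \<exists>x. x \<noteq> 0 \<and> b l x \<noteq> 1"
  unfolding Kset_def by auto

lemma Kin1': "l \<in> Kset \<Longrightarrow> \<exists>x. x \<noteq> 0 \<and> b l (inverse x) \<noteq> 1"
proof -
  assume "l \<in> Kset"
  then obtain x where "x \<noteq> 0" "b l x \<noteq> 1" using Kin1 by blast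
  then show ?thesis by (intro exI[of _ "inverse x"]) simp
qed

lemma Kin2: "l \<in> Kset \<Longrightarrow> \<exists>x. x \<noteq> 0 \<and> b l x \<noteq> b l (inverse x)"
  using K2 unfolding Kset_def by auto

lemma K_lt: "l \<in> Kset \<Longrightarrow> l < n" unfolding Kset_def by auto

lemma dist_fl:
  assumes "S \<inter> Kset \<noteq> S' \<inter> Kset"
  shows "\<exists>l<n. \<exists>x. x \<noteq> 0 \<and> wv (fl n S) l x \<noteq> wv (fl n S') l x"
proof -
  obtain l where l: "l \<in> Kset" "(l \<in> S) \<noteq> (l \<in> S')" using assms by blast
  obtain x where x: "x \<noteq> 0" "b l x \<noteq> b l (inverse x)" using Kin2[OF l(1)] by blast
  have "wv (fl n S) l x \<noteq> wv (fl n S') l x"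
    using l x K_lt[OF l(1)] by (auto simp: wv_fl)
  then show ?thesis using x K_lt[OF l(1)] by blast
qed

lemma dist_fl_sw:
  assumes j: "j \<in> Kset" and i: "i < n" "i \<notin> Kset"
  shows "\<exists>l<n. \<exists>x. x \<noteq> 0 \<and> wv (fl n S) l x \<noteq> wv (if e then swn n i j else sw n i j) l x"
proof -
  have jn: "j < n" "j \<noteq> i" using K_lt[OF j] j i by auto
  show ?thesis
  proof (cases "j \<in> S")
    case True
    obtain x where x: "x \<noteq> 0" "b j (inverse x) \<noteq> 1" using Kin1'[OF j] by blast
    have "wv (if e then swn n i j else sw n i j) j x = 1"
      using jn i x Kout[OF i, of x] Kout[OF i, of "inverse x"] by (auto simp: wv_sw wv_swn tr_def)
    moreover have "wv (fl n S) j x \<noteq> 1" using True x jn by (simp add: wv_fl)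
    ultimately show ?thesis using x jn by metis
  next
    case False
    obtain x where x: "x \<noteq> 0" "b j x \<noteq> 1" using Kin1[OF j] by blast
    have "wv (if e then swn n i j else sw n i j) j x = 1"
      using jn i x Kout[OF i, of x] Kout[OF i, of "inverse x"] by (auto simp: wv_sw wv_swn tr_def)
    moreover have "wv (fl n S) j x \<noteq> 1" using False x jn by (simp add: wv_fl)
    ultimately show ?thesis using x jn by metis
  qed
qed

lemma dist_sw_sw:
  assumes j: "j \<in> Kset" and i: "i < n" "i \<notin> Kset" and i': "i' < n" "i' \<notin> Kset"
    and ne: "(i, e) \<noteq> (i', e')"
  shows "\<exists>l<n. \<exists>x. x \<noteq> 0 \<and> wv (if e then swn n i j else sw n i j) l x \<noteq> wv (if e' then swn n i' j else sw n i' j) l x"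
proof -
  have jn: "j < n" "j \<noteq> i" "j \<noteq> i'" using K_lt[OF j] j i i' by auto
  show ?thesis
  proof (cases "i = i'")
    case True
    then have ee: "e \<noteq> e'" using ne by simp
    obtain x where x: "x \<noteq> 0" "b j x \<noteq> b j (inverse x)" using Kin2[OF j] by blast
    have "wv (if e then swn n i j else sw n i j) i x \<noteq> wv (if e' then swn n i' j else sw n i' j) i x"
      using ee True jn i x by (cases e) (auto simp: wv_sw wv_swn tr_def)
    then show ?thesis using x i by blast
  next
    case False
    obtain x where x: "x \<noteq> 0" "b j x \<noteq> 1" using Kin1[OF j] by blast
    obtain y where y: "y \<noteq> 0" "b j (inverse y) \<noteq> 1" using Kin1'[OF j] by blast
    have r: "wv (if e' then swn n i' j else sw n i' j) i z = 1" if "z \<noteq> 0" for z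
      using False jn i i' that Kout[OF i, of z] by (auto simp: wv_sw wv_swn tr_def)
    show ?thesis
    proof (cases e)
      case True
      have "wv (if e then swn n i j else sw n i j) i y \<noteq> 1" using True y jn i by (simp add: wv_swn)
      then show ?thesis using r[OF y(1)] y i by metis
    next
      case f: False
      have "wv (if e then swn n i j else sw n i j) i x \<noteq> 1" using f x jn i by (simp add: wv_sw tr_def)
      then show ?thesis using r[OF x(1)] x i by metis
    qed
  qed
qed

lemma family_bound:
  fixes G :: "'a mat set" and pf :: "nat \<times> bool \<Rightarrow> nat \<Rightarrow> nat"
  assumes fin: "finite (weyl_orbit G (split_torus n) \<beta>)"
    and mem: "\<And>a. a \<in> {..<n} \<times> (UNIV::bool set) \<Longrightarrow> SI n (pf a) \<and> Pm (2*n) (pf a) \<in> G"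
    and dist: "\<And>a a'. a \<in> {..<n} \<times> (UNIV::bool set) \<Longrightarrow> a' \<in> {..<n} \<times> (UNIV::bool set) \<Longrightarrow> a \<noteq> a'
       \<Longrightarrow> \<exists>l<n. \<exists>x. x \<noteq> 0 \<and> wv (pf a) l x \<noteq> wv (pf a') l x"
  shows "2*n \<le> card (weyl_orbit G (split_torus n) \<beta>)"
proof -
  let ?D = "{..<n} \<times> (UNIV::bool set)"
  have inj: "inj_on (\<lambda>a. chi (pf a)) ?D"
  proof (rule inj_onI, rule ccontr)
    fix a a' assume a: "a \<in> ?D" "a' \<in> ?D" "chi (pf a) = chi (pf a')" "a \<noteq> a'"
    obtain l x where "l < n" "x \<noteq> 0" "wv (pf a) l x \<noteq> wv (pf a') l x" using dist[OF a(1,2,4)] by blast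
    then have "chi (pf a) \<noteq> chi (pf a')" using chi_neq' mem a by blast
    then show False using a by simp
  qed
  have sub: "(\<lambda>a. chi (pf a)) ` ?D \<subseteq> weyl_orbit G (split_torus n) \<beta>"
    using orbit_mem mem unfolding chi_def by blast
  have "card ?D \<le> card (weyl_orbit G (split_torus n) \<beta>)" by (rule card_inj_on_le[OF inj sub fin])
  moreover have "card ?D = 2 * n" by (simp add: card_cartesian_product)
  ultimately show ?thesis by simp
qed

end

lemma sd_mem: "x \<in> sd i A \<longleftrightarrow> (x \<in> A) \<noteq> (x = i)"
  unfolding sd_def by auto

lemma sd_card_even:
  assumes "finite A" "odd (card A)"
  shows "even (card (sd i A))"
proof (cases "i \<in> A")
  case True
  then have "card (sd i A) = card A - 1" unfolding sd_def using assms(1) by simp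
  moreover have "card A \<ge> 1" using assms(2) by (cases "card A") auto
  ultimately show ?thesis using assms(2) by simp
next
  case False
  then have "card (sd i A) = card A + 1" unfolding sd_def using assms(1) by simp
  then show ?thesis using assms(2) by simp
qed

lemma sd_sub: "i < n \<Longrightarrow> A \<subseteq> {..<n} \<Longrightarrow> sd i A \<subseteq> {..<n}"
  unfolding sd_def by auto

lemma sd_inj: assumes "sd i A = sd i' A" shows "i = i'"
proof (rule ccontr)
  assume ne: "i \<noteq> i'"
  have "(i \<in> sd i A) = (i \<notin> A)" by (simp add: sd_mem)
  moreover have "(i \<in> sd i' A) = (i \<in> A)" using ne by (simp add: sd_mem)
  ultimately show False using assms by simp
qed

lemma sd_0_123: "sd i {0} \<noteq> sd i' {1,2,3}"
proof
  assume e: "sd i {0} = sd i' {1,2,3}"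
  have h: "x \<in> {1,2,3} \<Longrightarrow> x \<noteq> i' \<Longrightarrow> x = i" for x :: nat
  proof -
    assume "x \<in> {1,2,3}" "x \<noteq> i'"
    then have "x \<in> sd i' {1,2,3}" by (simp add: sd_mem)
    then have "x \<in> sd i {0}" using e by simp
    then show "x = i" using \<open>x \<in> {1,2,3}\<close> by (auto simp: sd_mem)
  qed
  show False
  proof (cases "i' = 1")
    case True then show False using h[of 2] h[of 3] by simp
  next
    case False then show False using h[of 1] h[of 2] h[of 3] by (cases "i' = 2") simp_all
  qed
qed

lemma card_sd_single: "i \<noteq> j \<Longrightarrow> card (sd i {j}) = 2" and card_sd_same: "sd j {j} = {}"
  unfolding sd_def by auto

context chr begin

lemma main:
  fixes G :: "'a mat set"
  assumes Gc: "(G = Sp n \<and> n > 1) \<or> (G = Omega_plus n \<and> n > 3)"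
    and nt: "\<exists>t\<in>split_torus n. \<beta> t \<noteq> 1"
  shows "2*n \<le> card (weyl_orbit G (split_torus n) \<beta>)"
proof -
  have np: "n > 0" using Gc by auto
  have "G \<subseteq> carrier_mat (2*n) (2*n)" using Gc Sp_carrier Omega_carrier by auto
  then have fin: "finite (weyl_orbit G (split_torus n) \<beta>)" by (rule finite_orbit)
  have "Kset \<noteq> {}"
  proof
    assume "Kset = {}"
    then have "\<forall>i<n. \<forall>x. x \<noteq> 0 \<longrightarrow> b i x = 1" unfolding Kset_def by auto
    then show False using all_triv np nt by blast
  qed
  then obtain j where j: "j \<in> Kset" by blast
  have jn: "j < n" using K_lt[OF j] .
  have memG: "Pm (2*n) p \<in> G" if si: "SI n p" and ev: "G \<noteq> Sp n \<Longrightarrow> even (card {l. l < 2*n \<and> l \<le> p l})" for p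
  proof (cases "G = Sp n")
    case True then show ?thesis using Pm_Sp[OF c2 si] by simp
  next
    case False
    then have "G = Omega_plus n" using Gc by auto
    then show ?thesis using Pm_Omega[OF si ev[OF False]] by simp
  qed
  have even_fl: "even (card {l. l < 2*n \<and> l \<le> fl n S l})" if "S \<subseteq> {..<n}" "even (card S)" for S
  proof -
    have "card S \<le> card {..<n}" using that(1) by (rule card_mono[rotated]) simp
    then show ?thesis using R_fl[OF that(1)] that(2) by simp
  qed
  show ?thesis
  proof (cases "G = Sp n \<or> (\<exists>m<n. m \<notin> Kset)")
    case True
    obtain X where X: "X \<subseteq> {..<n}" "X \<inter> Kset = {}" "G \<noteq> Sp n \<Longrightarrow> card X = 1"
    proof (cases "G = Sp n")
      case True then show ?thesis using that[of "{}"] by simp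
    next
      case False
      then obtain m where "m < n" "m \<notin> Kset" using \<open>G = Sp n \<or> (\<exists>m<n. m \<notin> Kset)\<close> by blast
      then show ?thesis using that[of "{m}"] by simp
    qed
    define pf where "pf a = (if fst a \<in> Kset then fl n (if snd a then sd (fst a) {j} else insert (fst a) X)
                             else (if snd a then swn n (fst a) j else sw n (fst a) j))" for a
    define cs where "cs a = (if snd a then sd (fst a) {j} else {fst a})" for a
    have pfK: "pf (i, e) = fl n (if e then sd i {j} else insert i X)" if "i \<in> Kset" for i e
      using that unfolding pf_def by simp
    have pfN: "pf (i, e) = (if e then swn n i j else sw n i j)" if "i \<notin> Kset" for i e
      using that unfolding pf_def by simp
    have csK: "(if e then sd i {j} else insert i X) \<inter> Kset = cs (i, e)" if "i \<in> Kset" for i e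
    proof (cases e)
      case True
      have "sd i {j} \<subseteq> Kset" using that j unfolding sd_def by auto
      then show ?thesis using True unfolding cs_def by auto
    next
      case False then show ?thesis using that X(2) unfolding cs_def by auto
    qed
    have cs_inj: "cs (i, e) \<noteq> cs (i', e')" if "(i, e) \<noteq> (i', e')" for i i' e e'
    proof (cases e; cases e')
      assume "e" "e'" then show ?thesis using that sd_inj unfolding cs_def by auto
    next
      assume "\<not> e" "\<not> e'" then show ?thesis using that unfolding cs_def by auto
    next
      assume a: "e" "\<not> e'"
      have "card (sd i {j}) \<noteq> 1" using card_sd_single[of i j] card_sd_same[of j] by (cases "i = j") auto
      then show ?thesis using a unfolding cs_def by auto
    next
      assume a: "\<not> e" "e'"
      have c: "card (sd i' {j}) \<noteq> 1" using card_sd_single[of i' j] card_sd_same[of j] by (cases "i' = j") auto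
      have "cs (i,e) = {i}" "cs (i',e') = sd i' {j}" using a unfolding cs_def by auto
      then show ?thesis
      proof (intro notI)
        assume eqs: "cs (i,e) = {i}" "cs (i',e') = sd i' {j}" and "cs (i,e) = cs (i',e')"
        then have "card {i} = card (sd i' {j})" by simp
        then show False using c by simp
      qed
    qed
    show ?thesis
    proof (rule family_bound[OF fin])
      fix a assume a: "a \<in> {..<n} \<times> (UNIV::bool set)"
      obtain i e where ie: "a = (i, e)" by (cases a)
      have i: "i < n" using a ie by simp
      show "SI n (pf a) \<and> Pm (2*n) (pf a) \<in> G"
      proof (cases "i \<in> Kset")
        case True
        let ?S = "if e then sd i {j} else insert i X"
        have S: "?S \<subseteq> {..<n}" using i jn X(1) unfolding sd_def by auto
        have "even (card ?S)" if "G \<noteq> Sp n"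
        proof (cases e)
          case True then show ?thesis using card_sd_single[of i j] card_sd_same[of j] by (cases "i = j") auto
        next
          case False
          have "i \<notin> X" using X(2) \<open>i \<in> Kset\<close> by blast
          moreover have "finite X" using X(1) finite_subset by blast
          ultimately show ?thesis using False X(3)[OF that] by simp
        qed
        then show ?thesis using SI_fl[of n ?S] memG[of "fl n ?S"] even_fl[OF S] pfK[OF True] ie by auto
      next
        case False
        have ij: "i \<noteq> j" using False j by blast
        show ?thesis
        proof (cases e)
          case True
          then show ?thesis using SI_swn[OF i jn ij] memG[of "swn n i j"] R_swn[OF i jn ij] pfN[OF False] ie by simp
        next
          case f: False
          then show ?thesis using SI_sw[OF i jn] memG[of "sw n i j"] R_sw[OF i jn ij] pfN[OF False] ie by simp
        qed
      qed
    next
      fix a a' assume a: "a \<in> {..<n} \<times> (UNIV::bool set)" "a' \<in> {..<n} \<times> (UNIV::bool set)" "a \<noteq> a'"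
      obtain i e where ie: "a = (i, e)" by (cases a)
      obtain i' e' where ie': "a' = (i', e')" by (cases a')
      have i: "i < n" "i' < n" using a ie ie' by auto
      show "\<exists>l<n. \<exists>x. x \<noteq> 0 \<and> wv (pf a) l x \<noteq> wv (pf a') l x"
      proof (cases "i \<in> Kset"; cases "i' \<in> Kset")
        assume k: "i \<in> Kset" "i' \<in> Kset"
        have "cs (i, e) \<noteq> cs (i', e')" using cs_inj a(3) ie ie' by simp
        then have ne: "(if e then sd i {j} else insert i X) \<inter> Kset \<noteq> (if e' then sd i' {j} else insert i' X) \<inter> Kset"
          unfolding csK[OF k(1)] csK[OF k(2)] .
        have p1: "pf a = fl n (if e then sd i {j} else insert i X)" using pfK[OF k(1)] ie by simp
        have p2: "pf a' = fl n (if e' then sd i' {j} else insert i' X)" using pfK[OF k(2)] ie' by simp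
        show ?thesis unfolding p1 p2 by (rule dist_fl[OF ne])
      next
        assume k: "i \<in> Kset" "i' \<notin> Kset"
        have p1: "pf a = fl n (if e then sd i {j} else insert i X)" using pfK[OF k(1)] ie by simp
        have p2: "pf a' = (if e' then swn n i' j else sw n i' j)" using pfN[OF k(2)] ie' by simp
        show ?thesis unfolding p1 p2 by (rule dist_fl_sw[OF j i(2) k(2)])
      next
        assume k: "i \<notin> Kset" "i' \<in> Kset"
        have p1: "pf a = (if e then swn n i j else sw n i j)" using pfN[OF k(1)] ie by simp
        have p2: "pf a' = fl n (if e' then sd i' {j} else insert i' X)" using pfK[OF k(2)] ie' by simp
        obtain l x where lx: "l < n" "x \<noteq> 0"
          "wv (fl n (if e' then sd i' {j} else insert i' X)) l x \<noteq> wv (if e then swn n i j else sw n i j) l x"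
          using dist_fl_sw[OF j i(1) k(1)] by blast
        show ?thesis unfolding p1 p2 using lx by (metis (no_types))
      next
        assume k: "i \<notin> Kset" "i' \<notin> Kset"
        have p1: "pf a = (if e then swn n i j else sw n i j)" using pfN[OF k(1)] ie by simp
        have p2: "pf a' = (if e' then swn n i' j else sw n i' j)" using pfN[OF k(2)] ie' by simp
        have ne: "(i, e) \<noteq> (i', e')" using a(3) ie ie' by simp
        show ?thesis unfolding p1 p2 by (rule dist_sw_sw[OF j i(1) k(1) i(2) k(2) ne])
      qed
    qed
  next
    case False
    then have GO: "G = Omega_plus n" "n > 3" using Gc by auto
    have Kall: "Kset = {..<n}" using False K_lt by auto
    define A where "A e = (if e then {1,2,3} else {0::nat})" for e
    define pf where "pf a = fl n (sd (fst a) (A (snd a)))" for a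
    have Asub: "A e \<subseteq> {..<n}" for e using GO(2) unfolding A_def by auto
    have Aodd: "finite (A e) \<and> odd (card (A e))" for e unfolding A_def by auto
    show ?thesis
    proof (rule family_bound[OF fin])
      fix a assume a: "a \<in> {..<n} \<times> (UNIV::bool set)"
      have "fst a < n" using a by auto
      then have S: "sd (fst a) (A (snd a)) \<subseteq> {..<n}" using sd_sub Asub by blast
      have "even (card (sd (fst a) (A (snd a))))" using sd_card_even Aodd by blast
      then show "SI n (pf a) \<and> Pm (2*n) (pf a) \<in> G"
        unfolding pf_def using SI_fl memG even_fl[OF S] by blast
    next
      fix a a' assume a: "a \<in> {..<n} \<times> (UNIV::bool set)" "a' \<in> {..<n} \<times> (UNIV::bool set)" "a \<noteq> a'"
      obtain i e where ie: "a = (i, e)" by (cases a)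
      obtain i' e' where ie': "a' = (i', e')" by (cases a')
      have i: "i < n" "i' < n" using a ie ie' by auto
      have ne: "sd i (A e) \<noteq> sd i' (A e')"
      proof (cases "e = e'")
        case True
        then have "i \<noteq> i'" using a(3) ie ie' by simp
        then show ?thesis using sd_inj[of i "A e" i'] True by auto
      next
        case False
        show ?thesis
        proof (cases e)
          case True
          then have "\<not> e'" using False by simp
          then show ?thesis using True sd_0_123[of i' i] unfolding A_def by (metis (full_types))
        next
          case f: False
          then have "e'" using False by simp
          then show ?thesis using f sd_0_123[of i i'] unfolding A_def by (metis (full_types))
        qed
      qed
      have "sd i (A e) \<inter> Kset \<noteq> sd i' (A e') \<inter> Kset"
        using ne sd_sub[OF i(1) Asub] sd_sub[OF i(2) Asub] unfolding Kall by (metis inf.absorb1)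
      then show "\<exists>l<n. \<exists>x. x \<noteq> 0 \<and> wv (pf a) l x \<noteq> wv (pf a') l x"
        using dist_fl unfolding pf_def ie ie' by simp
    qed
  qed
qed

end

theorem proposition4p13:
  fixes q n :: nat and G :: "'a :: {field, finite} mat set" and \<beta> :: "'a mat \<Rightarrow> complex"
  assumes "card (UNIV :: 'a set) = q" and "even q"
    and "(G = Sp n \<and> n > 1) \<or> (G = Omega_plus n \<and> n > 3)"
    and "linear_char (split_torus n) \<beta>"
    and "\<exists>t \<in> split_torus n. \<beta> t \<noteq> 1"
  shows "card (weyl_orbit G (split_torus n) \<beta>) \<ge> 2 * n"
proof -
  have c2: "(1::'a) + 1 = 0" by (rule char2) (use assms(1,2) in simp)
  interpret chr n \<beta> using assms(4) c2 by unfold_locales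
  show ?thesis using main[OF assms(3) assms(5)] by simp
qed

end
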